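(* Let $f_0:\mathbb{R}^d\to[0,\infty)$ be a uniformly continuous probability density. For $\eta>0$ define $h(\eta)=\max\{h\ge0:\sup_{x,y\in\mathbb{R}^d,\|x-y\|\le h}|f_0(x)-f_0(y)|\le\eta\}$. Then $h(\eta)>0$ for every $\eta>0$. Moreover, if $\mathcal{X}_n=\{x_1,\dots,x_n\}$ are drawn independently from $f_0$ with $n\ge16$, then with probability at least $1-1/n$, $$S_{\lambda+\|f_0-f\|_\infty+\eta}\subseteq \hat S_{\delta,\lambda}(f)\subseteq S_{\lambda-\|f_0-f\|_\infty-\eta}$$ holds simultaneously for all functions $f:\mathbb{R}^d\to\mathbb{R}$ and all constants $\eta,\lambda>0$ and $\delta$ such that $\delta\in[r_{n,\lambda,d},2h(\eta)]$, where $r_{n,\lambda,d}=2\big(\frac{16\,d\ln n}{\lambda v_d n}\big)^{1/d}$.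
   Context: $S_t=\{x\in\mathbb{R}^d:f_0(x)\ge t\}$. For a function $f$, $\hat S_{\delta,\lambda}(f)=\bigcup_{x\in A_{f,\lambda}}B(x,\delta/2)$, where $A_{f,\lambda}=\{x\in\mathcal{X}_n:f(x)\ge\lambda\}$ and $B(x,r)$ is the open Euclidean ball of radius $r$ around $x$. $v_d$ is the volume of the unit Euclidean ball in $\mathbb{R}^d$. *)

theory Defs
  imports "HOL-Probability.Probability"
begin

definition superlevel :: "('a \<Rightarrow> real) \<Rightarrow> ereal \<Rightarrow> 'a set" where
  "superlevel f0 t = {x. t \<le> ereal (f0 x)}"

definition supdist :: "('a \<Rightarrow> real) \<Rightarrow> ('a \<Rightarrow> real) \<Rightarrow> ereal" where
  "supdist f0 f = (SUP x. ereal \<bar>f0 x - f x\<bar>)"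

text \<open>h(eta): the largest h >= 0 with sup over dist x y <= h of |f0 x - f0 y| <= eta
  (as an extended real; it is infinite if every h qualifies).\<close>
definition modh :: "('a::metric_space \<Rightarrow> real) \<Rightarrow> real \<Rightarrow> ereal" where
  "modh f0 \<eta> = Sup {ereal h | h. h \<ge> 0 \<and>
      (\<forall>x y. dist x y \<le> h \<longrightarrow> \<bar>f0 x - f0 y\<bar> \<le> \<eta>)}"

definition Shat :: "nat \<Rightarrow> (nat \<Rightarrow> 'a::metric_space) \<Rightarrow> real \<Rightarrow> real \<Rightarrow> ('a \<Rightarrow> real) \<Rightarrow> 'a set" where
  "Shat n X \<delta> lam f = (\<Union>i\<in>{i. i < n \<and> f (X i) \<ge> lam}. ball (X i) (\<delta>/2))"

definition unit_ball_vol :: "'a::euclidean_space itself \<Rightarrow> real" where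
  "unit_ball_vol _ = measure lborel (ball (0::'a) 1)"

definition rnld :: "'a::euclidean_space itself \<Rightarrow> nat \<Rightarrow> real \<Rightarrow> real" where
  "rnld T n lam = 2 * ((16 * real DIM('a) * ln (real n)) / (lam * unit_ball_vol T * real n))
                    powr (1 / real DIM('a))"

end

theory Submission
  imports Defs
begin
lemma sep_exists:
  fixes s :: real assumes s: "s > 0"
  shows "\<exists>S::'a::metric_space set. (\<forall>y\<in>S. \<forall>y'\<in>S. y \<noteq> y' \<longrightarrow> s \<le> dist y y') \<and> (\<forall>x. \<exists>y\<in>S. dist x y < s)"
proof -
  define A where "A = {S::'a set. \<forall>y\<in>S. \<forall>y'\<in>S. y \<noteq> y' \<longrightarrow> s \<le> dist y y'}"
  have "\<forall>C\<in>chains A. \<Union>C \<in> A"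
  proof
    fix C assume C: "C \<in> chains A"
    have CA: "C \<subseteq> A" and ch: "\<And>S1 S2. S1 \<in> C \<Longrightarrow> S2 \<in> C \<Longrightarrow> S1 \<subseteq> S2 \<or> S2 \<subseteq> S1"
      using C unfolding chains_def chain_subset_def by blast+
    have "\<forall>y\<in>\<Union>C. \<forall>y'\<in>\<Union>C. y \<noteq> y' \<longrightarrow> s \<le> dist y y'"
    proof (intro ballI impI)
      fix y y' assume "y \<in> \<Union>C" "y' \<in> \<Union>C" "y \<noteq> y'"
      then obtain S1 S2 where S12: "S1 \<in> C" "S2 \<in> C" "y \<in> S1" "y' \<in> S2" by blast
      from ch[OF S12(1,2)] show "s \<le> dist y y'"
      proof
        assume "S1 \<subseteq> S2"
        then have "y \<in> S2" using S12 by blast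
        moreover have "S2 \<in> A" using CA S12 by blast
        ultimately show ?thesis using S12 \<open>y \<noteq> y'\<close> unfolding A_def by blast
      next
        assume "S2 \<subseteq> S1"
        then have "y' \<in> S1" using S12 by blast
        moreover have "S1 \<in> A" using CA S12 by blast
        ultimately show ?thesis using S12 \<open>y \<noteq> y'\<close> unfolding A_def by blast
      qed
    qed
    then show "\<Union>C \<in> A" unfolding A_def by simp
  qed
  then obtain S where S: "S \<in> A" "\<And>X. X \<in> A \<Longrightarrow> S \<subseteq> X \<Longrightarrow> X = S"
    using Zorn_Lemma[of A] by blast
  have "\<exists>y\<in>S. dist x y < s" for x
  proof (rule ccontr)
    assume H: "\<not> (\<exists>y\<in>S. dist x y < s)"
    have "\<forall>y\<in>insert x S. \<forall>y'\<in>insert x S. y \<noteq> y' \<longrightarrow> s \<le> dist y y'"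
    proof (intro ballI impI)
      fix y y' assume "y \<in> insert x S" "y' \<in> insert x S" "y \<noteq> y'"
      then consider "y = x" "y' \<in> S" | "y' = x" "y \<in> S" | "y \<in> S" "y' \<in> S" by blast
      then show "s \<le> dist y y'"
      proof cases
        case 1 then show ?thesis using H by (auto simp: not_less)
      next
        case 2 then show ?thesis using H by (auto simp: not_less dist_commute)
      next
        case 3 then show ?thesis using S(1) \<open>y \<noteq> y'\<close> unfolding A_def by blast
      qed
    qed
    then have "insert x S \<in> A" unfolding A_def by simp
    then have "insert x S = S" using S(2) by blast
    then have "x \<in> S" by blast
    then show False using H s by auto
  qed
  then show ?thesis using S(1) unfolding A_def by blast
qed

lemma geom_bound:
  fixes K :: "int set" and v :: real
  assumes K: "finite K" and v: "0 \<le> v" and le: "\<And>k. k \<in> K \<Longrightarrow> 2 powr (real_of_int k) \<le> v"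
  shows "(\<Sum>k\<in>K. 2 powr (real_of_int k) / 2) \<le> v"
proof (cases "K = {}")
  case True then show ?thesis using v by simp
next
  case False
  define m where "m = Max K"
  have mK: "m \<in> K" and km: "\<And>k. k \<in> K \<Longrightarrow> k \<le> m" using K False by (auto simp: m_def)
  have eq: "2 powr (real_of_int k) = 2 powr (real_of_int m) * (1/2) ^ nat (m - k)" if "k \<in> K" for k
  proof -
    have "real_of_int k = real_of_int m - real (nat (m - k))" using km[OF that] by simp
    then have "2 powr (real_of_int k) = 2 powr (real_of_int m) / 2 powr (real (nat (m - k)))"
      by (simp only: powr_diff)
    also have "2 powr (real (nat (m - k))) = (2::real) ^ nat (m - k)" by (rule powr_realpow) simp
    finally show ?thesis unfolding power_one_over by simp
  qed
  have inj: "inj_on (\<lambda>k. nat (m - k)) K"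
  proof (rule inj_onI)
    fix a b assume "a \<in> K" "b \<in> K" "nat (m - a) = nat (m - b)"
    with km[of a] km[of b] show "a = b" by simp
  qed
  have "(\<Sum>k\<in>K. 2 powr (real_of_int k) / 2) = (\<Sum>k\<in>K. 2 powr (real_of_int m) / 2 * (1/2::real) ^ nat (m - k))"
    by (rule sum.cong) (use eq in auto)
  also have "\<dots> = 2 powr (real_of_int m) / 2 * (\<Sum>k\<in>K. (1/2::real) ^ nat (m - k))"
    by (simp only: sum_distrib_left)
  also have "(\<Sum>k\<in>K. (1/2::real) ^ nat (m - k)) = (\<Sum>j\<in>(\<lambda>k. nat (m - k)) ` K. (1/2::real) ^ j)"
    using sum.reindex[OF inj, of "\<lambda>j. (1/2::real)^j"] by simp
  also have "\<dots> \<le> (\<Sum>j. (1/2::real) ^ j)"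
    by (rule sum_le_suminf) (auto intro: summable_geometric K)
  also have "(\<Sum>j. (1/2::real) ^ j) = 2" using suminf_geometric[of "1/2::real"] by simp
  finally have "(\<Sum>k\<in>K. 2 powr (real_of_int k) / 2) \<le> 2 powr (real_of_int m)" by simp
  also have "\<dots> \<le> v" using le[OF mK] .
  finally show ?thesis .
qed

lemma miss_prob:
  assumes M: "prob_space M" and B: "B \<in> sets M"
  shows "{X \<in> space (PiM {..<n} (\<lambda>_. M)). \<forall>i<n. X i \<notin> B} \<in> sets (PiM {..<n} (\<lambda>_. M))"
    "measure (PiM {..<n} (\<lambda>_. M)) {X \<in> space (PiM {..<n} (\<lambda>_. M)). \<forall>i<n. X i \<notin> B} = (1 - measure M B) ^ n"
proof -
  interpret Mp: prob_space M by fact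
  interpret product_prob_space "\<lambda>_::nat. M" using M by (simp add: product_prob_space_def product_prob_space_axioms_def product_sigma_finite_def prob_space_imp_sigma_finite)
  have eq: "{X \<in> space (PiM {..<n} (\<lambda>_. M)). \<forall>i<n. X i \<notin> B} = PiE {..<n} (\<lambda>_. space M - B)"
    by (auto simp: space_PiM PiE_def Pi_def)
  show "{X \<in> space (PiM {..<n} (\<lambda>_. M)). \<forall>i<n. X i \<notin> B} \<in> sets (PiM {..<n} (\<lambda>_. M))"
    unfolding eq using B by (intro sets_PiM_I_finite) auto
  have "emeasure (PiM {..<n} (\<lambda>_. M)) (PiE {..<n} (\<lambda>_. space M - B)) = (\<Prod>i\<in>{..<n}. emeasure M (space M - B))"
    using B by (intro emeasure_PiM) auto
  also have "\<dots> = ennreal ((1 - measure M B) ^ n)"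
    using B by (simp add: Mp.emeasure_eq_measure Mp.prob_compl prod_ennreal ennreal_power)
  finally show "measure (PiM {..<n} (\<lambda>_. M)) {X \<in> space (PiM {..<n} (\<lambda>_. M)). \<forall>i<n. X i \<notin> B} = (1 - measure M B) ^ n"
    unfolding eq using Mp.prob_le_1[of B] by (simp add: measure_def[of M B, symmetric] measure_def[of "PiM {..<n} (\<lambda>_. M)"])
qed

lemma count_bound:
  fixes f0 :: "'a::euclidean_space \<Rightarrow> real" and F :: "(int \<times> 'a) set" and lam s :: "int \<Rightarrow> real" and c :: real
  assumes meas: "f0 \<in> borel_measurable borel" and nonneg: "\<And>x. f0 x \<ge> 0"
   and dens: "(\<integral>\<^sup>+ x. ennreal (f0 x) \<partial>lborel) = 1"
   and lam: "\<And>k. lam k = 2 powr (real_of_int k)"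
   and sep: "\<And>k y y'. (k,y) \<in> F \<Longrightarrow> (k,y') \<in> F \<Longrightarrow> y \<noteq> y' \<Longrightarrow> s k \<le> dist y y'"
   and big: "\<And>k y z. (k,y) \<in> F \<Longrightarrow> dist y z < s k / 2 \<Longrightarrow> lam k \<le> f0 z"
   and vol: "\<And>k y. (k,y) \<in> F \<Longrightarrow> c \<le> lam k / 2 * measure lborel (ball y (s k / 2))"
   and c: "c > 0"
  shows "finite F \<and> real (card F) * c \<le> 1"
proof -
  define g where "g p z = lam (fst p) / 2 * indicator (ball (snd p) (s (fst p) / 2)) z" for p :: "int \<times> 'a" and z
  have gnn: "g p z \<ge> 0" for p z by (simp add: g_def lam)
  have fin_sub: "real (card G) * c \<le> 1" if G: "finite G" "G \<subseteq> F" for G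
  proof -
    have pw: "(\<Sum>p\<in>G. g p z) \<le> f0 z" for z
    proof -
      define Gz where "Gz = {p\<in>G. z \<in> ball (snd p) (s (fst p) / 2)}"
      have "(\<Sum>p\<in>G. g p z) = (\<Sum>p\<in>Gz. g p z)"
        unfolding Gz_def using G(1) by (intro sum.mono_neutral_right) (auto simp: g_def)
      also have "\<dots> = (\<Sum>p\<in>Gz. lam (fst p) / 2)"
        unfolding Gz_def by (intro sum.cong) (auto simp: g_def)
      also have "inj_on fst Gz"
      proof (rule inj_onI)
        fix p q assume "p \<in> Gz" "q \<in> Gz" "fst p = fst q"
        then obtain k y y' where pq: "p = (k,y)" "q = (k,y')" by (cases p, cases q) auto
        show "p = q"
        proof (rule ccontr)
          assume "p \<noteq> q"
          then have "y \<noteq> y'" using pq by simp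
          moreover have "(k,y) \<in> F" "(k,y') \<in> F" using \<open>p \<in> Gz\<close> \<open>q \<in> Gz\<close> pq G(2) Gz_def by auto
          ultimately have "s k \<le> dist y y'" by (rule sep[rotated 2])
          moreover have "dist y z < s k / 2" "dist y' z < s k / 2"
            using \<open>p \<in> Gz\<close> \<open>q \<in> Gz\<close> pq by (auto simp: Gz_def)
          moreover have "dist y y' \<le> dist y z + dist y' z" by (simp add: dist_triangle2)
          ultimately show False by linarith
        qed
      qed
      then have "(\<Sum>p\<in>Gz. lam (fst p) / 2) = (\<Sum>k\<in>fst ` Gz. lam k / 2)"
        by (simp add: sum.reindex)
      also have "\<dots> = (\<Sum>k\<in>fst ` Gz. 2 powr (real_of_int k) / 2)" by (simp add: lam)
      also have "\<dots> \<le> f0 z"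
      proof (rule geom_bound)
        show "finite (fst ` Gz)" using G(1) by (simp add: Gz_def)
        show "0 \<le> f0 z" by (rule nonneg)
        fix k assume "k \<in> fst ` Gz"
        then obtain y where "(k,y) \<in> Gz" by force
        then have "(k,y) \<in> F" "dist y z < s k / 2" using G(2) by (auto simp: Gz_def)
        then show "2 powr (real_of_int k) \<le> f0 z" using big lam by metis
      qed
      finally show ?thesis .
    qed
    have "(\<integral>\<^sup>+ z. ennreal (\<Sum>p\<in>G. g p z) \<partial>lborel) \<le> (\<integral>\<^sup>+ z. ennreal (f0 z) \<partial>lborel)"
      by (intro nn_integral_mono ennreal_leI pw)
    also have "\<dots> = 1" by (rule dens)
    also have "(\<integral>\<^sup>+ z. ennreal (\<Sum>p\<in>G. g p z) \<partial>lborel) = (\<integral>\<^sup>+ z. (\<Sum>p\<in>G. ennreal (g p z)) \<partial>lborel)"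
      using gnn by (simp add: sum_ennreal)
    also have "\<dots> = (\<Sum>p\<in>G. \<integral>\<^sup>+ z. ennreal (g p z) \<partial>lborel)"
      by (rule nn_integral_sum) (unfold g_def, intro measurable_compose[OF _ measurable_ennreal] borel_measurable_times borel_measurable_const borel_measurable_indicator, simp)
    also have "\<dots> = (\<Sum>p\<in>G. ennreal (lam (fst p) / 2 * measure lborel (ball (snd p) (s (fst p) / 2))))"
    proof (rule sum.cong)
      fix p assume "p \<in> G"
      have "(\<integral>\<^sup>+ z. ennreal (g p z) \<partial>lborel) = (\<integral>\<^sup>+ z. ennreal (lam (fst p) / 2) * indicator (ball (snd p) (s (fst p) / 2)) z \<partial>lborel)"
        by (intro nn_integral_cong) (simp add: g_def split: split_indicator)
      also have "\<dots> = ennreal (lam (fst p) / 2) * emeasure lborel (ball (snd p) (s (fst p) / 2))"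
        by (rule nn_integral_cmult_indicator) simp
      also have "emeasure lborel (ball (snd p) (s (fst p) / 2)) = ennreal (measure lborel (ball (snd p) (s (fst p) / 2)))"
        using emeasure_bounded_finite[of "ball (snd p) (s (fst p) / 2)"] by (intro emeasure_eq_measure2 fmeasurableI) (auto simp: borel_open)
      finally show "(\<integral>\<^sup>+ z. ennreal (g p z) \<partial>lborel) = ennreal (lam (fst p) / 2 * measure lborel (ball (snd p) (s (fst p) / 2)))"
        by (subst ennreal_mult) (auto simp: lam)
    qed simp
    also have "\<dots> = ennreal (\<Sum>p\<in>G. lam (fst p) / 2 * measure lborel (ball (snd p) (s (fst p) / 2)))"
      by (rule sum_ennreal) (simp add: lam)
    finally have "(\<Sum>p\<in>G. lam (fst p) / 2 * measure lborel (ball (snd p) (s (fst p) / 2))) \<le> 1"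
      by (simp add: ennreal_le_1)
    moreover have "real (card G) * c = (\<Sum>p\<in>G. c)" by simp
    moreover have "(\<Sum>p\<in>G. c) \<le> (\<Sum>p\<in>G. lam (fst p) / 2 * measure lborel (ball (snd p) (s (fst p) / 2)))"
      by (rule sum_mono) (use G(2) vol in auto)
    ultimately show ?thesis by linarith
  qed
  have "finite F"
  proof (rule ccontr)
    assume "infinite F"
    then obtain G where "finite G" "card G = nat \<lceil>1/c\<rceil> + 1" "G \<subseteq> F"
      using infinite_arbitrarily_large by blast
    then have "real (card G) * c \<le> 1" using fin_sub by blast
    moreover have "real (card G) > 1 / c" using \<open>card G = _\<close> by linarith
    ultimately show False using c by (simp add: field_simps)
  qed
  then show ?thesis using fin_sub by blast
qed

lemma modh_pos:
  fixes f0 :: "'a::metric_space \<Rightarrow> real"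
  assumes "uniformly_continuous_on UNIV f0" "\<eta> > 0"
  shows "modh f0 \<eta> > 0"
proof -
  have "\<forall>e>0. \<exists>d>0. \<forall>x\<in>UNIV. \<forall>x'\<in>UNIV. dist x' x < d \<longrightarrow> dist (f0 x') (f0 x) < e"
    using assms(1) unfolding uniformly_continuous_on_def .
  then obtain e where e0: "e > 0" and e1: "\<forall>x\<in>UNIV. \<forall>x'\<in>UNIV. dist x' x < e \<longrightarrow> dist (f0 x') (f0 x) < \<eta>"
    using assms(2) by blast
  have e: "e > 0" "\<And>x x'. dist x' x < e \<Longrightarrow> dist (f0 x') (f0 x) < \<eta>" using e0 e1 by blast+
  have "ereal (e/2) \<in> {ereal h | h. h \<ge> 0 \<and> (\<forall>x y. dist x y \<le> h \<longrightarrow> \<bar>f0 x - f0 y\<bar> \<le> \<eta>)}"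
  proof -
    have "\<bar>f0 x - f0 y\<bar> \<le> \<eta>" if "dist x y \<le> e/2" for x y
    proof -
      have "dist y x < e" using that e(1) by (simp add: dist_commute)
      then have "\<bar>f0 y - f0 x\<bar> < \<eta>" using e(2)[of x y] by (simp add: dist_real_def dist_commute abs_minus_commute)
      then show ?thesis by (simp add: abs_minus_commute)
    qed
    then have "ereal (e/2) = ereal (e/2) \<and> e/2 \<ge> 0 \<and> (\<forall>x y. dist x y \<le> e/2 \<longrightarrow> \<bar>f0 x - f0 y\<bar> \<le> \<eta>)"
      using e(1) by simp
    then show ?thesis by blast
  qed
  then have "ereal (e/2) \<le> modh f0 \<eta>" unfolding modh_def by (rule Sup_upper)
  moreover have "0 < ereal (e/2)" using e(1) by simp
  ultimately show ?thesis by (rule order.strict_trans2[rotated])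
qed

lemma modh_use:
  fixes f0 :: "'a::metric_space \<Rightarrow> real"
  assumes "ereal \<delta> \<le> 2 * modh f0 \<eta>" "dist x y < \<delta>/2"
  shows "\<bar>f0 x - f0 y\<bar> \<le> \<eta>"
proof -
  have "ereal (\<delta>/2) \<le> modh f0 \<eta>"
  proof (cases "modh f0 \<eta>")
    case (real r) then show ?thesis using assms(1) by simp
  next
    case PInf then show ?thesis by simp
  next
    case MInf then show ?thesis using assms(1) by simp
  qed
  moreover have "ereal (dist x y) < ereal (\<delta>/2)" using assms(2) by simp
  ultimately have "ereal (dist x y) < modh f0 \<eta>" by (rule order.strict_trans2[rotated])
  then obtain e where "e \<in> {ereal h | h. h \<ge> 0 \<and> (\<forall>x y. dist x y \<le> h \<longrightarrow> \<bar>f0 x - f0 y\<bar> \<le> \<eta>)}" "ereal (dist x y) < e"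
    unfolding modh_def by (auto simp: less_Sup_iff)
  then obtain h where "\<forall>x y. dist x y \<le> h \<longrightarrow> \<bar>f0 x - f0 y\<bar> \<le> \<eta>" "dist x y < h" by auto
  then show ?thesis by auto
qed

theorem lemmaS3:
  fixes f0 :: "'a::euclidean_space \<Rightarrow> real" and n :: nat
  assumes nonneg: "\<And>x. f0 x \<ge> 0"
    and dens: "(\<integral>\<^sup>+ x. ennreal (f0 x) \<partial>lborel) = 1"
    and unif: "uniformly_continuous_on UNIV f0"
    and n16: "n \<ge> 16"
  shows "(\<forall>\<eta>>0. modh f0 \<eta> > 0) \<and>
    (\<exists>E \<in> sets (PiM {..<n} (\<lambda>_. density lborel f0)).
       E \<subseteq> {X \<in> space (PiM {..<n} (\<lambda>_. density lborel f0)).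
              \<forall>(f::'a \<Rightarrow> real) \<eta> lam \<delta>. \<eta> > 0 \<longrightarrow> lam > 0 \<longrightarrow>
                 rnld TYPE('a) n lam \<le> \<delta> \<longrightarrow> ereal \<delta> \<le> 2 * modh f0 \<eta> \<longrightarrow>
                 superlevel f0 (ereal lam + supdist f0 f + ereal \<eta>) \<subseteq> Shat n X \<delta> lam f \<and>
                 Shat n X \<delta> lam f \<subseteq> superlevel f0 (ereal lam - supdist f0 f - ereal \<eta>)}
     \<and> measure (PiM {..<n} (\<lambda>_. density lborel f0)) E \<ge> 1 - 1 / real n)"
proof -
  define d where "d = DIM('a)"
  define v where "v = unit_ball_vol TYPE('a)"
  define M where "M = density lborel f0"
  define P where "P = PiM {..<n} (\<lambda>_. M)"
  define T where "T = 16 * real d * ln (real n) / real n"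
  define lamk where "lamk k = 2 powr (real_of_int k)" for k :: int
  define a where "a k = (T / (2 * lamk k * v)) powr (1 / real d)" for k
  define rho where "rho k = (1 - 1 / (4 * real d)) * a k" for k
  define s where "s k = a k / (4 * real d)" for k
  define S where "S k = (SOME S::'a set. (\<forall>y\<in>S. \<forall>y'\<in>S. y \<noteq> y' \<longrightarrow> s k \<le> dist y y') \<and> (\<forall>x. \<exists>y\<in>S. dist x y < s k))" for k
  define F where "F = {(k, y). y \<in> S k \<and> (\<forall>z\<in>ball y (rho k). lamk k \<le> f0 z)}"
  define Bad where "Bad p = {X \<in> space P. \<forall>i<n. X i \<notin> ball (snd p) (rho (fst p))}" for p :: "int \<times> 'a"
  define E where "E = space P - (\<Union>p\<in>F. Bad p)"

  have d1: "d \<ge> 1" unfolding d_def by (simp add: DIM_positive Suc_le_eq)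
  have n1: "real n \<ge> 16" using n16 by simp
  have lnn: "ln (real n) \<ge> 1"
  proof -
    have "exp 1 \<le> (3::real)" using exp_le by simp
    also have "\<dots> \<le> real n" using n1 by simp
    finally show ?thesis using ln_ge_iff by (metis exp_gt_zero ln_exp ln_le_cancel_iff order_less_le_trans)
  qed
  have vball: "measure lborel (ball (y::'a) r) = v * r ^ d" if "r \<ge> 0" for y r
  proof -
    have "measure lborel (ball (y::'a) r) = Ball_Volume.unit_ball_vol (real d) * r ^ d"
      using emeasure_ball[OF that, of y] that by (simp add: measure_def d_def)
    moreover have "v = Ball_Volume.unit_ball_vol (real d)"
      using emeasure_ball[of 1 "0::'a"] by (simp add: v_def Defs.unit_ball_vol_def measure_def d_def)
    ultimately show ?thesis by simp
  qed
  have vpos: "v > 0"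
  proof -
    have "v = Ball_Volume.unit_ball_vol (real d)"
      using emeasure_ball[of 1 "0::'a"] by (simp add: v_def Defs.unit_ball_vol_def measure_def d_def)
    then show ?thesis by simp
  qed
  have Tpos: "T > 0" unfolding T_def using d1 n1 lnn by (simp add: divide_pos_pos)
  have lamkpos: "lamk k > 0" for k by (simp add: lamk_def)
  have apos: "a k > 0" for k unfolding a_def using Tpos vpos lamkpos[of k] by simp
  have apow: "a k ^ d = T / (2 * lamk k * v)" for k
  proof -
    have "a k ^ d = a k powr (real d)" using apos[of k] by (simp add: powr_realpow)
    also have "\<dots> = T / (2 * lamk k * v)"
      unfolding a_def using Tpos vpos lamkpos[of k] d1 by (simp add: powr_powr)
    finally show ?thesis .
  qed
  have spos: "s k > 0" for k unfolding s_def using apos[of k] d1 by simp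
  have Sprop: "(\<forall>y\<in>S k. \<forall>y'\<in>S k. y \<noteq> y' \<longrightarrow> s k \<le> dist y y') \<and> (\<forall>x. \<exists>y\<in>S k. dist x y < s k)" for k
    unfolding S_def by (rule someI_ex) (rule sep_exists[OF spos])
  have f0meas: "f0 \<in> borel_measurable borel"
    by (intro borel_measurable_continuous_onI uniformly_continuous_imp_continuous unif)
  have f0meas': "(\<lambda>x. ennreal (f0 x)) \<in> borel_measurable borel"
    by (rule measurable_compose[OF f0meas measurable_ennreal])
  have probM: "prob_space M"
    unfolding M_def by (rule prob_spaceI) (subst emeasure_density, auto simp: dens f0meas')
  interpret Mp: prob_space M by (rule probM)
  have probP: "prob_space P" unfolding P_def by (rule prob_space_PiM) (rule probM)
  interpret Pp: prob_space P by (rule probP)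
  have cpos: "T / (4 * (8 * real d) ^ d) > 0" using Tpos d1 by simp
  have Fcount: "finite F \<and> real (card F) * (T / (4 * (8 * real d) ^ d)) \<le> 1"
  proof (rule count_bound[OF f0meas nonneg dens _ _ _ _ cpos, where lam = lamk and s = s])
    show "lamk k = 2 powr real_of_int k" for k by (simp add: lamk_def)
    show "s k \<le> dist y y'" if "(k, y) \<in> F" "(k, y') \<in> F" "y \<noteq> y'" for k and y y' :: 'a
      using that Sprop[of k] by (auto simp: F_def)
    show "lamk k \<le> f0 z" if "(k, y) \<in> F" "dist y z < s k / 2" for k and y z :: 'a
    proof -
      have "s k / 2 \<le> rho k"
      proof -
        have "1 / (8 * real d) \<le> 1 - 1 / (4 * real d)" using d1 by (simp add: field_simps)
        then have "a k * (1 / (8 * real d)) \<le> a k * (1 - 1 / (4 * real d))"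
          using apos[of k] by (intro mult_left_mono) auto
        then show ?thesis by (simp add: s_def rho_def field_simps)
      qed
      then show ?thesis using that by (auto simp: F_def)
    qed
    show "T / (4 * (8 * real d) ^ d) \<le> lamk k / 2 * measure lborel (ball y (s k / 2))" for k and y :: 'a
    proof -
      have m1: "measure lborel (ball y (s k / 2)) = v * (s k / 2) ^ d"
        by (rule vball) (use spos[of k] in simp)
      have "s k / 2 = a k / (8 * real d)" by (simp add: s_def)
      then have "measure lborel (ball y (s k / 2)) = v * (a k / (8 * real d)) ^ d" using m1 by simp
      also have "\<dots> = v * (a k ^ d) / (8 * real d) ^ d" by (simp add: power_divide)
      also have "\<dots> = T / (2 * lamk k) / (8 * real d) ^ d" using vpos by (simp add: apow)
      finally show ?thesis using lamkpos[of k] by (simp add: field_simps)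
    qed
  qed
  have setsM: "sets M = sets borel" by (simp add: M_def)
  have ballM: "ball y r \<in> sets M" for y :: 'a and r by (simp add: setsM)
  have mass: "Mp.prob (ball y (rho k)) \<ge> 3 * T / 8" if "(k, y) \<in> F" for k y
  proof -
    have lb: "\<forall>z\<in>ball y (rho k). lamk k \<le> f0 z" using that by (simp add: F_def)
    have rhopos: "rho k \<ge> 0" unfolding rho_def using apos[of k] d1 by (simp add: field_simps)
    have bern: "3 / 4 \<le> (1 - 1 / (4 * real d)) ^ d"
    proof -
      have "1 + real d * (- (1 / (4 * real d))) \<le> (1 + (- (1 / (4 * real d)))) ^ d"
        by (rule Bernoulli_inequality) (use d1 in \<open>simp add: field_simps\<close>)
      then show ?thesis using d1 by simp
    qed
    have "lamk k * measure lborel (ball y (rho k)) = lamk k * (v * rho k ^ d)" using vball[OF rhopos] by simp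
    also have "\<dots> = (1 - 1 / (4 * real d)) ^ d * (lamk k * v * a k ^ d)"
      by (simp add: rho_def power_mult_distrib)
    also have "lamk k * v * a k ^ d = T / 2" using lamkpos[of k] vpos by (simp add: apow)
    finally have eq: "lamk k * measure lborel (ball y (rho k)) = (1 - 1 / (4 * real d)) ^ d * (T / 2)" .
    have "ennreal (lamk k * measure lborel (ball y (rho k))) = ennreal (lamk k) * emeasure lborel (ball y (rho k))"
    proof -
      have "emeasure lborel (ball y (rho k)) = ennreal (measure lborel (ball y (rho k)))"
        using emeasure_bounded_finite[of "ball y (rho k)"]
        by (intro emeasure_eq_measure2 fmeasurableI) (auto simp: borel_open)
      then show ?thesis using lamkpos[of k] by (subst ennreal_mult) auto
    qed
    also have "\<dots> = (\<integral>\<^sup>+ z. ennreal (lamk k) * indicator (ball y (rho k)) z \<partial>lborel)"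
      by (rule nn_integral_cmult_indicator[symmetric]) simp
    also have "\<dots> \<le> (\<integral>\<^sup>+ z. ennreal (f0 z) * indicator (ball y (rho k)) z \<partial>lborel)"
      using lb by (intro nn_integral_mono) (auto split: split_indicator intro!: ennreal_leI)
    also have "\<dots> = emeasure M (ball y (rho k))"
      unfolding M_def by (rule emeasure_density[symmetric]) (auto simp: f0meas')
    also have "\<dots> = ennreal (Mp.prob (ball y (rho k)))" by (rule Mp.emeasure_eq_measure)
    finally have "lamk k * measure lborel (ball y (rho k)) \<le> Mp.prob (ball y (rho k))"
      by (rule ennreal_le_iff[THEN iffD1, rotated]) simp
    moreover have "3 * T / 8 \<le> (1 - 1 / (4 * real d)) ^ d * (T / 2)"
      using mult_right_mono[OF bern, of "T/2"] Tpos by simp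
    ultimately show ?thesis using eq by linarith
  qed
  define Q where "Q = real n ^ (6 * d)"
  have Qpos: "Q > 0" using n1 by (simp add: Q_def)
  have Badsets: "Bad p \<in> sets P" for p
    unfolding Bad_def P_def by (rule miss_prob(1)[OF probM ballM])
  have Badmeas: "measure P (Bad p) \<le> 1 / Q" if "p \<in> F" for p
  proof -
    obtain k y where p: "p = (k, y)" by (cases p)
    define q where "q = Mp.prob (ball y (rho k))"
    have q1: "q \<le> 1" and q0: "3 * T / 8 \<le> q" using mass[of k y] that p by (auto simp: q_def)
    have "measure P (Bad p) = (1 - q) ^ n"
      unfolding Bad_def P_def q_def p fst_conv snd_conv by (rule miss_prob(2)[OF probM ballM])
    also have "\<dots> \<le> (exp (- (3 * T / 8))) ^ n"
    proof (rule power_mono)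
      have "1 + (- q) \<le> exp (- q)" by (rule exp_ge_add_one_self)
      also have "exp (- q) \<le> exp (- (3 * T / 8))" using q0 by simp
      finally show "1 - q \<le> exp (- (3 * T / 8))" by simp
      show "0 \<le> 1 - q" using q1 by simp
    qed
    also have "\<dots> = exp (real n * (- (3 * T / 8)))" by (rule exp_of_nat_mult[symmetric])
    also have "real n * (- (3 * T / 8)) = - (real (6 * d) * ln (real n))"
      using n1 by (simp add: T_def field_simps)
    also have "exp (- (real (6 * d) * ln (real n))) = 1 / Q"
    proof -
      have "ln (real n ^ (6 * d)) = real (6 * d) * ln (real n)"
        using n1 by (intro ln_realpow)
      then have "exp (real (6 * d) * ln (real n)) = exp (ln (real n ^ (6 * d)))" by simp
      also have "\<dots> = Q" using n1 unfolding Q_def by (intro exp_ln) simp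
      finally have "exp (real (6 * d) * ln (real n)) = Q" .
      then show ?thesis by (simp add: exp_minus field_simps)
    qed
    finally show ?thesis .
  qed
  have Esets: "E \<in> sets P"
    unfolding E_def using Fcount Badsets by (intro sets.Diff sets.top sets.finite_UN) auto
  have cardF: "real (card F) / Q \<le> 1 / real n"
  proof (cases "F = {}")
    case True then show ?thesis by simp
  next
    case False
    then obtain k y where "(k, y) \<in> F" by auto
    from mass[OF this] have "3 * T / 8 \<le> 1" using Mp.prob_le_1[of "ball y (rho k)"] by linarith
    then have "6 * real d * ln (real n) \<le> real n" using n1 by (simp add: T_def field_simps)
    then have dn: "real d \<le> real n" using lnn d1
      by (smt (verit) mult_le_cancel_left1 of_nat_0_le_iff)
    have c1: "real (card F) * T \<le> 4 * (8 * real d) ^ d"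
      using Fcount Tpos d1 by (simp add: field_simps)
    have "real (card F) * real n * (4 * real d * ln (real n)) = real (card F) * T * (real n * real n) / 4"
      using n1 by (simp add: T_def field_simps)
    also have "\<dots> \<le> 4 * (8 * real d) ^ d * (real n * real n) / 4"
      using c1 by (intro divide_right_mono mult_right_mono) auto
    also have "\<dots> = (8 * real d) ^ d * real n ^ 2" by (simp add: power2_eq_square)
    also have "(8 * real d) ^ d \<le> (real n ^ 2) ^ d"
    proof (rule power_mono)
      have "8 * real d \<le> real n * real n" using dn n1 by (intro mult_mono) auto
      then show "8 * real d \<le> real n ^ 2" by (simp add: power2_eq_square)
    qed simp
    then have "(8 * real d) ^ d * real n ^ 2 \<le> (real n ^ 2) ^ d * real n ^ 2" by (intro mult_right_mono) auto
    also have "(real n ^ 2) ^ d * real n ^ 2 = real n ^ (2 * d + 2)" by (simp only: power_add power_mult)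
    also have "\<dots> \<le> Q" unfolding Q_def using n1 d1 by (intro power_increasing) auto
    finally have A: "real (card F) * real n * (4 * real d * ln (real n)) \<le> Q" .
    have "1 * 1 \<le> real d * ln (real n)" using d1 lnn by (intro mult_mono) auto
    then have one: "1 \<le> 4 * real d * ln (real n)" by simp
    have "real (card F) * real n * 1 \<le> real (card F) * real n * (4 * real d * ln (real n))"
      by (rule mult_left_mono[OF one]) simp
    then have "real (card F) * real n \<le> real (card F) * real n * (4 * real d * ln (real n))" by simp
    with A have "real (card F) * real n \<le> Q" by linarith
    then show ?thesis using Qpos n1 by (simp add: field_simps)
  qed
  have Emeas: "measure P E \<ge> 1 - 1 / real n"
  proof -
    have "measure P (\<Union>p\<in>F. Bad p) \<le> (\<Sum>p\<in>F. measure P (Bad p))"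
      using Fcount Badsets by (intro Pp.finite_measure_subadditive_finite) auto
    also have "\<dots> \<le> (\<Sum>p\<in>F. 1 / Q)" using Badmeas by (intro sum_mono) auto
    also have "\<dots> = real (card F) / Q" by simp
    also have "\<dots> \<le> 1 / real n" by (rule cardF)
    finally have "measure P (\<Union>p\<in>F. Bad p) \<le> 1 / real n" .
    moreover have "measure P E = 1 - measure P (\<Union>p\<in>F. Bad p)"
      unfolding E_def using Fcount Badsets by (intro Pp.prob_compl sets.finite_UN) auto
    ultimately show ?thesis by linarith
  qed
  have hit: "\<exists>i<n. X i \<in> ball x \<rho>"
    if XE: "X \<in> E" and lam: "lam > 0" and rho: "(T / (lam * v)) powr (1 / real d) \<le> \<rho>"
      and lb: "\<forall>z\<in>ball x \<rho>. lam \<le> f0 z" for X x \<rho> lam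
  proof -
    define k where "k = \<lfloor>log 2 lam\<rfloor>"
    have k1: "lamk k \<le> lam"
    proof -
      have "lamk k \<le> 2 powr (log 2 lam)" unfolding lamk_def k_def by (intro powr_mono) auto
      also have "\<dots> = lam" using lam by simp
      finally show ?thesis .
    qed
    have k2: "lam < 2 * lamk k"
    proof -
      have "lam = 2 powr (log 2 lam)" using lam by simp
      also have "\<dots> < 2 powr (real_of_int k + 1)" unfolding k_def by (intro powr_less_mono) linarith+
      also have "\<dots> = 2 * lamk k" by (simp add: lamk_def powr_add)
      finally show ?thesis .
    qed
    have ak: "a k \<le> \<rho>"
    proof -
      have "T / (2 * lamk k * v) \<le> T / (lam * v)"
        using k2 lam vpos Tpos lamkpos[of k] by (intro divide_left_mono) auto
      then have "a k \<le> (T / (lam * v)) powr (1 / real d)"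
        unfolding a_def using Tpos vpos lamkpos[of k] by (intro powr_mono2) auto
      then show ?thesis using rho by linarith
    qed
    obtain y where y: "y \<in> S k" "dist x y < s k" using Sprop[of k] by blast
    have sa: "s k + rho k = a k" using d1 by (simp add: s_def rho_def field_simps)
    have sub: "ball y (rho k) \<subseteq> ball x \<rho>"
    proof
      fix z assume "z \<in> ball y (rho k)"
      then have "dist y z < rho k" by simp
      moreover have "dist x z \<le> dist x y + dist y z" by (rule dist_triangle)
      ultimately show "z \<in> ball x \<rho>" using y(2) sa ak by simp
    qed
    have "(k, y) \<in> F" unfolding F_def using y(1) sub lb k1 by force
    moreover have "X \<in> space P" "X \<notin> Bad (k, y) \<or> (k, y) \<notin> F" using XE by (auto simp: E_def)
    ultimately have "\<exists>i<n. X i \<in> ball y (rho k)" by (auto simp: Bad_def)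
    then show ?thesis using sub by blast
  qed
  have main: "E \<subseteq> {X \<in> space P.
              \<forall>(f::'a \<Rightarrow> real) \<eta> lam \<delta>. \<eta> > 0 \<longrightarrow> lam > 0 \<longrightarrow>
                 rnld TYPE('a) n lam \<le> \<delta> \<longrightarrow> ereal \<delta> \<le> 2 * modh f0 \<eta> \<longrightarrow>
                 superlevel f0 (ereal lam + supdist f0 f + ereal \<eta>) \<subseteq> Shat n X \<delta> lam f \<and>
                 Shat n X \<delta> lam f \<subseteq> superlevel f0 (ereal lam - supdist f0 f - ereal \<eta>)}"
  proof (rule subsetI, intro CollectI conjI allI impI)
    fix X assume XE: "X \<in> E"
    then show "X \<in> space P" by (simp add: E_def)
    fix f :: "'a \<Rightarrow> real" and \<eta> lam \<delta> :: real
    assume eta: "\<eta> > 0" and lam: "lam > 0" and rn: "rnld TYPE('a) n lam \<le> \<delta>"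
      and dm: "ereal \<delta> \<le> 2 * modh f0 \<eta>"
    have "rnld TYPE('a) n lam = 2 * (T / (lam * v)) powr (1 / real d)"
    proof -
      have "(16 * real d * ln (real n)) / (lam * v * real n) = T / (lam * v)"
        unfolding T_def using n1 by (simp add: field_simps)
      then show ?thesis unfolding rnld_def v_def d_def by simp
    qed
    then have rho: "(T / (lam * v)) powr (1 / real d) \<le> \<delta> / 2" using rn by simp
    define \<epsilon> where "\<epsilon> = supdist f0 f"
    have epsb: "ereal \<bar>f0 z - f z\<bar> \<le> \<epsilon>" for z
      unfolding \<epsilon>_def supdist_def by (rule SUP_upper) simp
    have eps0: "0 \<le> \<epsilon>" using epsb[of undefined] by (rule order_trans[rotated]) simp
    have close: "\<bar>f0 z - f0 z'\<bar> \<le> \<eta>" if "dist z z' < \<delta> / 2" for z z'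
      by (rule modh_use[OF dm that])
    show "superlevel f0 (ereal lam + supdist f0 f + ereal \<eta>) \<subseteq> Shat n X \<delta> lam f"
    proof
      fix x assume "x \<in> superlevel f0 (ereal lam + supdist f0 f + ereal \<eta>)"
      then have xs: "ereal lam + \<epsilon> + ereal \<eta> \<le> ereal (f0 x)" by (simp add: superlevel_def \<epsilon>_def)
      obtain e where e: "\<epsilon> = ereal e" "e \<ge> 0"
      proof (cases \<epsilon>)
        case (real r) then show ?thesis using that eps0 by simp
      next
        case PInf then show ?thesis using xs by simp
      next
        case MInf then show ?thesis using eps0 by simp
      qed
      have fx: "lam + e + \<eta> \<le> f0 x" using xs e by simp
      have lb: "\<forall>z\<in>ball x (\<delta> / 2). lam + e \<le> f0 z"
      proof
        fix z assume "z \<in> ball x (\<delta> / 2)"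
        then have "\<bar>f0 x - f0 z\<bar> \<le> \<eta>" using close by simp
        then show "lam + e \<le> f0 z" using fx by linarith
      qed
      then have lb': "\<forall>z\<in>ball x (\<delta> / 2). lam \<le> f0 z" using e(2) by force
      obtain i where i: "i < n" "X i \<in> ball x (\<delta> / 2)" using hit[OF XE lam rho lb'] by blast
      have "\<bar>f0 (X i) - f (X i)\<bar> \<le> e" using epsb[of "X i"] e by simp
      moreover have "lam + e \<le> f0 (X i)" using lb i by blast
      ultimately have "lam \<le> f (X i)" by linarith
      moreover have "x \<in> ball (X i) (\<delta> / 2)" using i by (simp add: dist_commute)
      ultimately show "x \<in> Shat n X \<delta> lam f" unfolding Shat_def using i by blast
    qed
    show "Shat n X \<delta> lam f \<subseteq> superlevel f0 (ereal lam - supdist f0 f - ereal \<eta>)"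
    proof
      fix x assume "x \<in> Shat n X \<delta> lam f"
      then obtain i where i: "i < n" "lam \<le> f (X i)" "dist (X i) x < \<delta> / 2" unfolding Shat_def by auto
      have "ereal lam - \<epsilon> - ereal \<eta> \<le> ereal (f0 x)"
      proof (cases \<epsilon>)
        case (real e)
        have "\<bar>f0 (X i) - f (X i)\<bar> \<le> e" using epsb[of "X i"] real by simp
        moreover have "\<bar>f0 (X i) - f0 x\<bar> \<le> \<eta>" using close i(3) by blast
        ultimately have "lam - e - \<eta> \<le> f0 x" using i(2) by linarith
        then show ?thesis using real by simp
      next
        case PInf then show ?thesis by simp
      next
        case MInf then show ?thesis using eps0 by simp
      qed
      then show "x \<in> superlevel f0 (ereal lam - supdist f0 f - ereal \<eta>)" by (simp add: superlevel_def \<epsilon>_def)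
    qed
  qed
  show ?thesis
    using modh_pos[OF unif] Esets Emeas main unfolding P_def M_def by blast
qed

end
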